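(* Let $k$ be an algebraically closed field, let $L$ and $G$ be finite groups with $G$ acting on $L$ by group automorphisms (and $L$ acting trivially on $G$), and let $K=kL\natural^{\tau}_{\sigma}k^G$ be the crossed coproduct Hopf algebra determined by normalized $2$-cocycles $\sigma$ and $\tau$ as described in the context. Let $M$, $N$ be finite dimensional $K$-modules. Then for each $x\in G$ there are isomorphisms of $k^{\sigma_x}L$-modules \begin{itemize} \item[(i)] $(M\otimes N)_x\simeq \bigoplus_{y,z\in G,\ yz=x} M_y\otimes {}^{y}N_z$, and \item[(ii)] $(M^* )_x\simeq {}^{x}(M_{x^{-1}})^*$, \end{itemize} where the right hand sides are regarded as $k^{\sigma_x}L$-modules as explained in the context.
   Context: $k^G=\mathrm{Hom}_k(kG,k)$ has basis $\{p_x:x\in G\}$ dual to $G$, with $p_xp_y=\delta_{x,y}p_x$. A normalized 2-cocycle $\sigma:L\times L\to (k^G)^\times$ is written $\sigma(l,m)=\sum_{x\in G}\sigma_x(l,m)p_x$ with $\sigma(l,m)\sigma(lm,n)=\sigma(m,n)\sigma(l,mn)$ and $\sigma(1,l)=\sigma(l,1)=1$; each $\sigma_x:L\times L\to k^\times$ is then a normalized 2-cocycle. A normalized 2-cocycle $\tau:L\to k^G\otimes k^G$ is $\tau(l)=\sum_{x,y}\tau_{x,y}(l)p_x\otimes p_y$ with $\tau_{x,y}:L\to k^\times$ satisfying $\tau_{xy,z}(l)\tau_{x,y}(l)=\tau_{x,yz}(l)\tau_{y,z}(x^{-1}\cdot l)$ and $\tau_{1,x}=\tau_{x,1}=1$.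 It is assumed that $\sigma_{xy}(l,m)\tau_{x,y}(lm)=\sigma_x(l,m)\sigma_y(x^{-1}\cdot l,x^{-1}\cdot m)\tau_{x,y}(l)\tau_{x,y}(m)$ for all $l,m\in L$, $x,y\in G$. The crossed coproduct $K=kL\natural^\tau_\sigma k^G$ is $kL\otimes k^G$ (elements $l\natural p_x$) with product $(l\natural p_x)(m\natural p_y)=\delta_{x,y}\sigma_x(l,m)\,lm\natural p_x$, coproduct $\Delta(l\natural p_x)=\sum_{y\in G}\tau_{y,y^{-1}x}(l)(l\natural p_y)\otimes((y^{-1}\cdot l)\natural p_{y^{-1}x})$, counit $\varepsilon(l\natural p_x)=\delta_{1,x}$ and antipode $S(l\natural p_x)=\tau_{x,x^{-1}}(l^{-1})\sigma_x(l^{-1},l)(x^{-1}\cdot l^{-1})\natural p_{x^{-1}}$. For a 2-cocycle $\alpha:L\times L\to k^\times$, the twisted group algebra $k^\alpha L$ has basis $\{\overline{l}:l\in L\}$ with $\overline{l}\,\overline{m}=\alpha(l,m)\overline{lm}$; the subalgebra $kL\cdot p_x$ of $K$ is identified with $k^{\sigma_x}L$ via $l\natural p_x\mapsto \overline{l}$. For a $K$-module $M$, $M_x=p_x\cdot M$ is a $k^{\sigma_x}L$-module. For $y\in G$ and a 2-cocycle $\alpha$, ${}^y\alpha(l,m)=\alpha(y^{-1}\cdot l,y^{-1}\cdot m)$, and the conjugate ${}^yM_z$ is $M_z$ as a vector space with $k^{{}^y\sigma_z}L$-module structure $\overline{l}\cdot_y v=\overline{y^{-1}\cdot l}\cdot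 v$. The tensor product of a $k^\alpha L$-module and a $k^\beta L$-module is a $k^{\alpha\beta}L$-module with $\overline{l}$ acting as $\overline{l}\otimes\overline{l}$; the dual of a $k^\alpha L$-module $U$ is a $k^{\alpha^{-1}}L$-module via $(\overline{l}\cdot f)(u)=f(\overline{l}^{-1}u)$. Thus $M_y\otimes{}^yN_z$ is a $k^{\sigma_y\,{}^y\sigma_z}L$-module, made into a $k^{\sigma_{yz}}L$-module via the algebra isomorphism $k^{\sigma_{yz}}L\to k^{\sigma_y\,{}^y\sigma_z}L$, $\overline{l}\mapsto\tau_{y,z}(l)\overline{l}$; and ${}^x(M_{x^{-1}})^*$ is a $k^{{}^x\sigma_{x^{-1}}^{-1}}L$-module, made into a $k^{\sigma_x}L$-module via the algebra isomorphism $k^{\sigma_x}L\to k^{{}^x\sigma_{x^{-1}}^{-1}}L$, $\overline{l}\mapsto \tau_{x,x^{-1}}^{-1}(l)\overline{l}$. $M^*=\mathrm{Hom}_k(M,k)$ with $(b\cdot f)(m)=f(S(b)m)$. *)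

theory Defs
  imports "HOL-Algebra.Group" "HOL-Computational_Algebra.Polynomial"
begin

definition alg_closed :: "'k::field itself \<Rightarrow> bool" where
  "alg_closed _ \<longleftrightarrow> (\<forall>p::'k poly. 0 < degree p \<longrightarrow> (\<exists>z. poly p z = 0))"

text \<open>sig x l m stands for sigma_x(l,m); tau x y l stands for tau_{x,y}(l);
  act y l stands for y . l.\<close>

definition crossed_coproduct_data ::
  "('l,'e1) monoid_scheme \<Rightarrow> ('g,'e2) monoid_scheme \<Rightarrow> ('g \<Rightarrow> 'l \<Rightarrow> 'l)
   \<Rightarrow> ('g \<Rightarrow> 'l \<Rightarrow> 'l \<Rightarrow> 'k::field) \<Rightarrow> ('g \<Rightarrow> 'g \<Rightarrow> 'l \<Rightarrow> 'k) \<Rightarrow> bool" where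
  "crossed_coproduct_data L G act sig tau \<longleftrightarrow>
     group L \<and> group G \<and> finite (carrier L) \<and> finite (carrier G) \<and>
     (\<forall>y\<in>carrier G. act y \<in> hom L L \<and> bij_betw (act y) (carrier L) (carrier L)) \<and>
     (\<forall>l\<in>carrier L. act \<one>\<^bsub>G\<^esub> l = l) \<and>
     (\<forall>x\<in>carrier G. \<forall>y\<in>carrier G. \<forall>l\<in>carrier L. act (x \<otimes>\<^bsub>G\<^esub> y) l = act x (act y l)) \<and>
     (\<forall>x\<in>carrier G. \<forall>l\<in>carrier L. \<forall>m\<in>carrier L. sig x l m \<noteq> 0) \<and>
     (\<forall>x\<in>carrier G. \<forall>l\<in>carrier L. \<forall>m\<in>carrier L. \<forall>n\<in>carrier L.
        sig x l m * sig x (l \<otimes>\<^bsub>L\<^esub> m) n = sig x m n * sig x l (m \<otimes>\<^bsub>L\<^esub> n)) \<and>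
     (\<forall>x\<in>carrier G. \<forall>l\<in>carrier L. sig x \<one>\<^bsub>L\<^esub> l = 1 \<and> sig x l \<one>\<^bsub>L\<^esub> = 1) \<and>
     (\<forall>x\<in>carrier G. \<forall>y\<in>carrier G. \<forall>l\<in>carrier L. tau x y l \<noteq> 0) \<and>
     (\<forall>x\<in>carrier G. \<forall>y\<in>carrier G. \<forall>z\<in>carrier G. \<forall>l\<in>carrier L.
        tau (x \<otimes>\<^bsub>G\<^esub> y) z l * tau x y l = tau x (y \<otimes>\<^bsub>G\<^esub> z) l * tau y z (act (inv\<^bsub>G\<^esub> x) l)) \<and>
     (\<forall>x\<in>carrier G. \<forall>l\<in>carrier L. tau \<one>\<^bsub>G\<^esub> x l = 1 \<and> tau x \<one>\<^bsub>G\<^esub> l = 1) \<and>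
     (\<forall>x\<in>carrier G. \<forall>y\<in>carrier G. \<forall>l\<in>carrier L. \<forall>m\<in>carrier L.
        sig (x \<otimes>\<^bsub>G\<^esub> y) l m * tau x y (l \<otimes>\<^bsub>L\<^esub> m)
        = sig x l m * sig y (act (inv\<^bsub>G\<^esub> x) l) (act (inv\<^bsub>G\<^esub> x) m) * tau x y l * tau x y m)"

text \<open>Vectors of k^I (I a finite index set) are functions vanishing outside I;
  matrices are functions I x I -> k.\<close>

definition vecs :: "'a set \<Rightarrow> ('a \<Rightarrow> 'k::zero) set" where
  "vecs I = {v. \<forall>i. i \<notin> I \<longrightarrow> v i = 0}"

definition mv :: "'a set \<Rightarrow> ('a \<Rightarrow> 'a \<Rightarrow> 'k::comm_ring_1) \<Rightarrow> ('a \<Rightarrow> 'k) \<Rightarrow> ('a \<Rightarrow> 'k)" where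
  "mv I A v = (\<lambda>i. if i \<in> I then (\<Sum>j\<in>I. A i j * v j) else 0)"

definition kron :: "('a \<Rightarrow> 'a \<Rightarrow> 'k::times) \<Rightarrow> ('b \<Rightarrow> 'b \<Rightarrow> 'k) \<Rightarrow> ('a \<times> 'b) \<Rightarrow> ('a \<times> 'b) \<Rightarrow> 'k" where
  "kron A B = (\<lambda>(i,j) (i',j'). A i i' * B j j')"

definition lin_span :: "('x \<Rightarrow> 'k::comm_ring_1) set \<Rightarrow> ('x \<Rightarrow> 'k) set" where
  "lin_span S = {(\<lambda>p. \<Sum>t\<in>T. c t * t p) | T c. finite T \<and> T \<subseteq> S}"

definition lin_on :: "('x \<Rightarrow> 'k::comm_ring_1) set \<Rightarrow> (('x \<Rightarrow> 'k) \<Rightarrow> ('y \<Rightarrow> 'k)) \<Rightarrow> bool" where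
  "lin_on V f \<longleftrightarrow>
     (\<forall>u\<in>V. \<forall>v\<in>V. f (\<lambda>p. u p + v p) = (\<lambda>q. f u q + f v q)) \<and>
     (\<forall>c. \<forall>u\<in>V. f (\<lambda>p. c * u p) = (\<lambda>q. c * f u q))"

definition lin_functional :: "('x \<Rightarrow> 'k::comm_ring_1) set \<Rightarrow> (('x \<Rightarrow> 'k) \<Rightarrow> 'k) \<Rightarrow> bool" where
  "lin_functional V f \<longleftrightarrow>
     (\<forall>u\<in>V. \<forall>v\<in>V. f (\<lambda>p. u p + v p) = f u + f v) \<and>
     (\<forall>c. \<forall>u\<in>V. f (\<lambda>p. c * u p) = c * f u)"

text \<open>Tensor product of subspaces U of k^X and W of k^Y, realised inside k^(X x Y).\<close>
definition tensor_sub :: "('x \<Rightarrow> 'k::comm_ring_1) set \<Rightarrow> ('y \<Rightarrow> 'k) set \<Rightarrow> ('x \<times> 'y \<Rightarrow> 'k) set" where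
  "tensor_sub U W = lin_span {(\<lambda>(i,j). u i * w j) | u w. u \<in> U \<and> w \<in> W}"

definition dual_space :: "('x \<Rightarrow> 'k::comm_ring_1) set \<Rightarrow> (('x \<Rightarrow> 'k) \<Rightarrow> 'k) set" where
  "dual_space U = {f. lin_functional U f \<and> (\<forall>v. v \<notin> U \<longrightarrow> f v = 0)}"

text \<open>Isomorphism of modules over a twisted group algebra k^alpha L, where the module
  structures are given by the actions of the basis elements bar l.\<close>
definition tw_iso :: "'l set \<Rightarrow> ('x \<Rightarrow> 'k::comm_ring_1) set \<Rightarrow> ('l \<Rightarrow> ('x \<Rightarrow> 'k) \<Rightarrow> ('x \<Rightarrow> 'k))
    \<Rightarrow> ('y \<Rightarrow> 'k) set \<Rightarrow> ('l \<Rightarrow> ('y \<Rightarrow> 'k) \<Rightarrow> ('y \<Rightarrow> 'k)) \<Rightarrow> bool" where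
  "tw_iso Ls V a W b \<longleftrightarrow>
     (\<exists>f. lin_on V f \<and> bij_betw f V W \<and> (\<forall>l\<in>Ls. \<forall>v\<in>V. f (a l v) = b l (f v)))"

text \<open>A finite dimensional K-module is given on k^I (I finite) by the matrices
  rho l x of the basis elements l # p_x of K, subject to the multiplication rule
  of K and the requirement that the unit 1_K = sum_x 1 # p_x acts as identity.\<close>
definition K_module :: "('l,'e1) monoid_scheme \<Rightarrow> ('g,'e2) monoid_scheme
    \<Rightarrow> ('g \<Rightarrow> 'l \<Rightarrow> 'l \<Rightarrow> 'k::field) \<Rightarrow> 'a set \<Rightarrow> ('l \<Rightarrow> 'g \<Rightarrow> 'a \<Rightarrow> 'a \<Rightarrow> 'k) \<Rightarrow> bool" where
  "K_module L G sig I rho \<longleftrightarrow> finite I \<and>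
     (\<forall>l\<in>carrier L. \<forall>m\<in>carrier L. \<forall>x\<in>carrier G. \<forall>y\<in>carrier G. \<forall>v\<in>vecs I.
        mv I (rho l x) (mv I (rho m y) v)
        = (if x = y then (\<lambda>i. sig x l m * mv I (rho (l \<otimes>\<^bsub>L\<^esub> m) x) v i) else (\<lambda>i. 0))) \<and>
     (\<forall>v\<in>vecs I. (\<lambda>i. \<Sum>x\<in>carrier G. mv I (rho \<one>\<^bsub>L\<^esub> x) v i) = v)"

text \<open>Matrices of l # p_x on M tensor N (via the coproduct of K).\<close>
definition tensor_rho :: "('g,'e2) monoid_scheme \<Rightarrow> ('g \<Rightarrow> 'l \<Rightarrow> 'l) \<Rightarrow> ('g \<Rightarrow> 'g \<Rightarrow> 'l \<Rightarrow> 'k::field)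
    \<Rightarrow> ('l \<Rightarrow> 'g \<Rightarrow> 'a \<Rightarrow> 'a \<Rightarrow> 'k) \<Rightarrow> ('l \<Rightarrow> 'g \<Rightarrow> 'b \<Rightarrow> 'b \<Rightarrow> 'k)
    \<Rightarrow> 'l \<Rightarrow> 'g \<Rightarrow> ('a \<times> 'b) \<Rightarrow> ('a \<times> 'b) \<Rightarrow> 'k" where
  "tensor_rho G act tau rhoM rhoN l x =
     (\<lambda>(i,j) (i',j'). \<Sum>y\<in>carrier G.
        tau y (inv\<^bsub>G\<^esub> y \<otimes>\<^bsub>G\<^esub> x) l * rhoM l y i i'
        * rhoN (act (inv\<^bsub>G\<^esub> y) l) (inv\<^bsub>G\<^esub> y \<otimes>\<^bsub>G\<^esub> x) j j')"

text \<open>Matrices of l # p_x on M^* in the dual basis: (b.f)(m) = f(S(b) m), i.e. the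
  transpose of the matrix of S(l # p_x).\<close>
definition dual_rho :: "('l,'e1) monoid_scheme \<Rightarrow> ('g,'e2) monoid_scheme \<Rightarrow> ('g \<Rightarrow> 'l \<Rightarrow> 'l)
    \<Rightarrow> ('g \<Rightarrow> 'l \<Rightarrow> 'l \<Rightarrow> 'k::field) \<Rightarrow> ('g \<Rightarrow> 'g \<Rightarrow> 'l \<Rightarrow> 'k)
    \<Rightarrow> ('l \<Rightarrow> 'g \<Rightarrow> 'a \<Rightarrow> 'a \<Rightarrow> 'k) \<Rightarrow> 'l \<Rightarrow> 'g \<Rightarrow> 'a \<Rightarrow> 'a \<Rightarrow> 'k" where
  "dual_rho L G act sig tau rho l x =
     (\<lambda>i j. tau x (inv\<^bsub>G\<^esub> x) (inv\<^bsub>L\<^esub> l) * sig x (inv\<^bsub>L\<^esub> l) l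
            * rho (act (inv\<^bsub>G\<^esub> x) (inv\<^bsub>L\<^esub> l)) (inv\<^bsub>G\<^esub> x) j i)"

text \<open>The component M_x = p_x . M as a k^{sigma_x}L-module (bar l acts as l # p_x).\<close>
definition comp_space :: "('l,'e1) monoid_scheme \<Rightarrow> 'a set \<Rightarrow> ('l \<Rightarrow> 'g \<Rightarrow> 'a \<Rightarrow> 'a \<Rightarrow> 'k::field)
    \<Rightarrow> 'g \<Rightarrow> ('a \<Rightarrow> 'k) set" where
  "comp_space L I rho x = mv I (rho \<one>\<^bsub>L\<^esub> x) ` vecs I"

definition comp_act :: "'a set \<Rightarrow> ('l \<Rightarrow> 'g \<Rightarrow> 'a \<Rightarrow> 'a \<Rightarrow> 'k::field) \<Rightarrow> 'g
    \<Rightarrow> 'l \<Rightarrow> ('a \<Rightarrow> 'k) \<Rightarrow> ('a \<Rightarrow> 'k)" where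
  "comp_act I rho x l = mv I (rho l x)"

text \<open>The direct sum over y in G (z = y^{-1} x) of M_y tensor ^yN_z, realised in
  k^(G x I x J); the summand indexed by y is (\<lambda>p. w (y,p)).\<close>
definition sum_space :: "('l,'e1) monoid_scheme \<Rightarrow> ('g,'e2) monoid_scheme \<Rightarrow> 'a set \<Rightarrow> 'b set
    \<Rightarrow> ('l \<Rightarrow> 'g \<Rightarrow> 'a \<Rightarrow> 'a \<Rightarrow> 'k::field) \<Rightarrow> ('l \<Rightarrow> 'g \<Rightarrow> 'b \<Rightarrow> 'b \<Rightarrow> 'k) \<Rightarrow> 'g
    \<Rightarrow> ('g \<times> ('a \<times> 'b) \<Rightarrow> 'k) set" where
  "sum_space L G I J rhoM rhoN x =
     {w. (\<forall>y p. y \<notin> carrier G \<longrightarrow> w (y,p) = 0) \<and>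
         (\<forall>y\<in>carrier G. (\<lambda>p. w (y,p)) \<in>
            tensor_sub (comp_space L I rhoM y) (comp_space L J rhoN (inv\<^bsub>G\<^esub> y \<otimes>\<^bsub>G\<^esub> x)))}"

text \<open>On the summand M_y tensor ^yN_z, bar l acts as
  tau_{y,z}(l) (bar l tensor bar(y^{-1}.l)).\<close>
definition sum_act :: "('g,'e2) monoid_scheme \<Rightarrow> ('g \<Rightarrow> 'l \<Rightarrow> 'l) \<Rightarrow> ('g \<Rightarrow> 'g \<Rightarrow> 'l \<Rightarrow> 'k::field)
    \<Rightarrow> 'a set \<Rightarrow> 'b set \<Rightarrow> ('l \<Rightarrow> 'g \<Rightarrow> 'a \<Rightarrow> 'a \<Rightarrow> 'k) \<Rightarrow> ('l \<Rightarrow> 'g \<Rightarrow> 'b \<Rightarrow> 'b \<Rightarrow> 'k) \<Rightarrow> 'g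
    \<Rightarrow> 'l \<Rightarrow> ('g \<times> ('a \<times> 'b) \<Rightarrow> 'k) \<Rightarrow> ('g \<times> ('a \<times> 'b) \<Rightarrow> 'k)" where
  "sum_act G act tau I J rhoM rhoN x l w =
     (\<lambda>(y,p). if y \<in> carrier G then
        tau y (inv\<^bsub>G\<^esub> y \<otimes>\<^bsub>G\<^esub> x) l
        * mv (I \<times> J) (kron (rhoM l y) (rhoN (act (inv\<^bsub>G\<^esub> y) l) (inv\<^bsub>G\<^esub> y \<otimes>\<^bsub>G\<^esub> x)))
             (\<lambda>q. w (y,q)) p
      else 0)"

text \<open>U = M_{x^{-1}} is a k^{sigma_{x^{-1}}}L-module; its x-conjugate has bar l acting as
  bar m with m = x^{-1}.l; the dual has (bar l . f)(u) = f(bar m^{-1} u) with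
  bar m^{-1} = sigma_{x^{-1}}(m^{-1},m)^{-1} bar(m^{-1}); finally bar l acts through
  tau_{x,x^{-1}}(l)^{-1} bar l.\<close>
definition conj_dual_act :: "('l,'e1) monoid_scheme \<Rightarrow> ('g,'e2) monoid_scheme \<Rightarrow> ('g \<Rightarrow> 'l \<Rightarrow> 'l)
    \<Rightarrow> ('g \<Rightarrow> 'l \<Rightarrow> 'l \<Rightarrow> 'k::field) \<Rightarrow> ('g \<Rightarrow> 'g \<Rightarrow> 'l \<Rightarrow> 'k)
    \<Rightarrow> 'a set \<Rightarrow> ('l \<Rightarrow> 'g \<Rightarrow> 'a \<Rightarrow> 'a \<Rightarrow> 'k) \<Rightarrow> 'g
    \<Rightarrow> 'l \<Rightarrow> (('a \<Rightarrow> 'k) \<Rightarrow> 'k) \<Rightarrow> (('a \<Rightarrow> 'k) \<Rightarrow> 'k)" where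
  "conj_dual_act L G act sig tau I rho x l f =
     (let m = act (inv\<^bsub>G\<^esub> x) l; xi = inv\<^bsub>G\<^esub> x in
      (\<lambda>v. if v \<in> comp_space L I rho xi then
              inverse (tau x xi l)
              * f (\<lambda>i. inverse (sig xi (inv\<^bsub>L\<^esub> m) m) * mv I (rho (inv\<^bsub>L\<^esub> m) xi) v i)
           else 0))"

end

theory Submission
  imports Defs
begin


definition ind :: "'a \<Rightarrow> 'a \<Rightarrow> 'k::comm_ring_1" where
  "ind i = (\<lambda>p. if p = i then 1 else 0)"

lemma mv_vecs: "mv I A v \<in> vecs I"
  by (simp add: mv_def vecs_def)

lemma mv_add: "mv I A (\<lambda>p. u p + v p) = (\<lambda>i. mv I A u i + mv I A v i)"
  by (auto simp: mv_def distrib_left sum.distrib)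

lemma mv_scale: "mv I A (\<lambda>p. c * v p) = (\<lambda>i. c * mv I A v i)"
  by (auto simp: mv_def sum_distrib_left mult.left_commute)

lemma mv_sum: "mv I A (\<lambda>p. \<Sum>y\<in>S. g y p) = (\<lambda>i. \<Sum>y\<in>S. mv I A (g y) i)"
proof (rule ext)
  fix i show "mv I A (\<lambda>p. \<Sum>y\<in>S. g y p) i = (\<Sum>y\<in>S. mv I A (g y) i)"
    by (cases "i \<in> I") (auto simp: mv_def sum_distrib_left intro: sum.swap)
qed

lemma mv_zero: "mv I A (\<lambda>p. 0) = (\<lambda>i. 0)"
  by (auto simp: mv_def)

lemma mv_cong: "(\<And>i. i \<in> I \<Longrightarrow> u i = v i) \<Longrightarrow> mv I A u = mv I A v"
  by (auto simp: mv_def intro!: sum.cong)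

lemma kron_rw:
  assumes "finite I" "finite J"
  shows "mv (I\<times>J) (kron A B) w = (\<lambda>(i,j). mv I A (\<lambda>i'. mv J B (\<lambda>j'. w(i',j')) j) i)"
proof (rule ext, clarify)
  fix i j
  show "mv (I\<times>J) (kron A B) w (i,j) = mv I A (\<lambda>i'. mv J B (\<lambda>j'. w(i',j')) j) i"
    using assms
    by (auto simp: mv_def kron_def sum_distrib_left mult.assoc sum.cartesian_product split_def)
qed

lemma mv_comm:
  "mv J B (\<lambda>j'. mv I C (\<lambda>i''. h i'' j') i') j = mv I C (\<lambda>i''. mv J B (\<lambda>j'. h i'' j') j) i'"
  by (auto simp: mv_def sum_distrib_left mult.left_commute intro: sum.swap)

lemma kron_comp:
  assumes fin: "finite I" "finite J"
    and hA: "\<forall>v\<in>vecs I. mv I A (mv I C v) = (\<lambda>i. a * mv I A' v i)"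
    and hB: "\<forall>v\<in>vecs J. mv J B (mv J D v) = (\<lambda>i. b * mv J B' v i)"
    and w: "w \<in> vecs (I\<times>J)"
  shows "mv (I\<times>J) (kron A B) (mv (I\<times>J) (kron C D) w) = (\<lambda>p. (a*b) * mv (I\<times>J) (kron A' B') w p)"
proof (rule ext, clarify)
  fix i j
  define h where "h = (\<lambda>i''. mv J B (\<lambda>j'. mv J D (\<lambda>j''. w(i'',j'')) j') j)"
  have wv: "(\<lambda>j''. w(i'',j'')) \<in> vecs J" for i''
    using w by (auto simp: vecs_def)
  have h: "h = (\<lambda>i''. b * mv J B' (\<lambda>j''. w(i'',j'')) j)"
    unfolding h_def using hB wv by (auto intro!: ext)
  have hv: "h \<in> vecs I"
    unfolding h by (auto simp: vecs_def mv_def) (use w in \<open>auto simp: vecs_def\<close>)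
  have "mv (I\<times>J) (kron A B) (mv (I\<times>J) (kron C D) w) (i,j)
      = mv I A (\<lambda>i'. mv J B (\<lambda>j'. mv I C (\<lambda>i''. mv J D (\<lambda>j''. w(i'',j'')) j') i') j) i"
    by (simp add: kron_rw[OF fin])
  also have "\<dots> = mv I A (\<lambda>i'. mv I C h i') i"
    unfolding h_def by (rule arg_cong[where f="\<lambda>g. mv I A g i"], rule ext, rule mv_comm)
  also have "\<dots> = a * mv I A' h i"
    using hA hv by (metis)
  also have "\<dots> = a * (b * mv I A' (\<lambda>i'. mv J B' (\<lambda>j''. w(i',j'')) j) i)"
    unfolding h by (simp add: mv_scale)
  also have "\<dots> = (a*b) * mv (I\<times>J) (kron A' B') w (i,j)"
    by (simp add: kron_rw[OF fin])
  finally show "mv (I\<times>J) (kron A B) (mv (I\<times>J) (kron C D) w) (i,j) = (a*b) * mv (I\<times>J) (kron A' B') w (i,j)" .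
qed


lemma ccd_grp:
  assumes "crossed_coproduct_data L G act sig tau"
  shows "group L" "group G" "finite (carrier G)" "finite (carrier L)"
  using assms by (auto simp: crossed_coproduct_data_def)

lemma ccd_gh:
  assumes "crossed_coproduct_data L G act sig tau" "y \<in> carrier G"
  shows "group_hom L L (act y)"
  using assms by (auto simp: crossed_coproduct_data_def group_hom_def group_hom_axioms_def)

lemma act_one:
  assumes "crossed_coproduct_data L G act sig tau" "y \<in> carrier G"
  shows "act y \<one>\<^bsub>L\<^esub> = \<one>\<^bsub>L\<^esub>"
  using group_hom.hom_one[OF ccd_gh[OF assms]] .

lemma act_inv:
  assumes "crossed_coproduct_data L G act sig tau" "y \<in> carrier G" "l \<in> carrier L"
  shows "act y (inv\<^bsub>L\<^esub> l) = inv\<^bsub>L\<^esub> (act y l)"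
  using group_hom.hom_inv[OF ccd_gh[OF assms(1,2)] assms(3)] .

lemma act_closed:
  assumes "crossed_coproduct_data L G act sig tau" "y \<in> carrier G" "l \<in> carrier L"
  shows "act y l \<in> carrier L"
  using group_hom.hom_closed[OF ccd_gh[OF assms(1,2)] assms(3)] .

lemma sq_one: "(s::'k::field) \<noteq> 0 \<Longrightarrow> s = s * s \<Longrightarrow> s = 1"
  by (metis mult_cancel_left1)

lemma ccd_act1: "crossed_coproduct_data L G act sig tau \<Longrightarrow> l \<in> carrier L \<Longrightarrow> act \<one>\<^bsub>G\<^esub> l = l"
  unfolding crossed_coproduct_data_def by (elim conjE) blast
lemma ccd_sig_nz: "crossed_coproduct_data L G act sig tau \<Longrightarrow> x \<in> carrier G \<Longrightarrow> l \<in> carrier L \<Longrightarrow> m \<in> carrier L \<Longrightarrow> sig x l m \<noteq> 0"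
  unfolding crossed_coproduct_data_def by (elim conjE) blast
lemma ccd_sig_u1: "crossed_coproduct_data L G act sig tau \<Longrightarrow> x \<in> carrier G \<Longrightarrow> l \<in> carrier L \<Longrightarrow> sig x \<one>\<^bsub>L\<^esub> l = 1"
  unfolding crossed_coproduct_data_def by (elim conjE) blast
lemma ccd_sig_u2: "crossed_coproduct_data L G act sig tau \<Longrightarrow> x \<in> carrier G \<Longrightarrow> l \<in> carrier L \<Longrightarrow> sig x l \<one>\<^bsub>L\<^esub> = 1"
  unfolding crossed_coproduct_data_def by (elim conjE) blast
lemma ccd_tau_nz: "crossed_coproduct_data L G act sig tau \<Longrightarrow> x \<in> carrier G \<Longrightarrow> y \<in> carrier G \<Longrightarrow> l \<in> carrier L \<Longrightarrow> tau x y l \<noteq> 0"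
  unfolding crossed_coproduct_data_def by (elim conjE) blast
lemma ccd_tau_u1: "crossed_coproduct_data L G act sig tau \<Longrightarrow> x \<in> carrier G \<Longrightarrow> l \<in> carrier L \<Longrightarrow> tau \<one>\<^bsub>G\<^esub> x l = 1"
  unfolding crossed_coproduct_data_def by (elim conjE) simp
lemma ccd_compat: "crossed_coproduct_data L G act sig tau \<Longrightarrow> x \<in> carrier G \<Longrightarrow> y \<in> carrier G \<Longrightarrow> l \<in> carrier L \<Longrightarrow> m \<in> carrier L \<Longrightarrow>
    sig (x \<otimes>\<^bsub>G\<^esub> y) l m * tau x y (l \<otimes>\<^bsub>L\<^esub> m)
        = sig x l m * sig y (act (inv\<^bsub>G\<^esub> x) l) (act (inv\<^bsub>G\<^esub> x) m) * tau x y l * tau x y m"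
  unfolding crossed_coproduct_data_def by (elim conjE) simp

lemma sig_one:
  assumes D: "crossed_coproduct_data L G act sig tau" and lm: "l \<in> carrier L" "m \<in> carrier L"
  shows "sig \<one>\<^bsub>G\<^esub> l m = 1"
proof -
  interpret G: group G using ccd_grp[OF D] by simp
  interpret L: group L using ccd_grp[OF D] by simp
  have c: "sig (\<one>\<^bsub>G\<^esub> \<otimes>\<^bsub>G\<^esub> \<one>\<^bsub>G\<^esub>) l m * tau \<one>\<^bsub>G\<^esub> \<one>\<^bsub>G\<^esub> (l \<otimes>\<^bsub>L\<^esub> m)
        = sig \<one>\<^bsub>G\<^esub> l m * sig \<one>\<^bsub>G\<^esub> (act (inv\<^bsub>G\<^esub> \<one>\<^bsub>G\<^esub>) l) (act (inv\<^bsub>G\<^esub> \<one>\<^bsub>G\<^esub>) m)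
          * tau \<one>\<^bsub>G\<^esub> \<one>\<^bsub>G\<^esub> l * tau \<one>\<^bsub>G\<^esub> \<one>\<^bsub>G\<^esub> m"
    by (rule ccd_compat[OF D G.one_closed G.one_closed lm])
  have "sig \<one>\<^bsub>G\<^esub> l m = sig \<one>\<^bsub>G\<^esub> l m * sig \<one>\<^bsub>G\<^esub> l m"
    using c by (simp add: ccd_tau_u1[OF D] ccd_act1[OF D] lm)
  moreover have "sig \<one>\<^bsub>G\<^esub> l m \<noteq> 0"
    by (rule ccd_sig_nz[OF D G.one_closed lm])
  ultimately show ?thesis by (rule sq_one[rotated])
qed

lemma tau_one:
  assumes D: "crossed_coproduct_data L G act sig tau" and yz: "y \<in> carrier G" "z \<in> carrier G"
  shows "tau y z \<one>\<^bsub>L\<^esub> = 1"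
proof -
  interpret G: group G using ccd_grp[OF D] by simp
  interpret L: group L using ccd_grp[OF D] by simp
  have c: "sig (y \<otimes>\<^bsub>G\<^esub> z) \<one>\<^bsub>L\<^esub> \<one>\<^bsub>L\<^esub> * tau y z (\<one>\<^bsub>L\<^esub> \<otimes>\<^bsub>L\<^esub> \<one>\<^bsub>L\<^esub>)
        = sig y \<one>\<^bsub>L\<^esub> \<one>\<^bsub>L\<^esub> * sig z (act (inv\<^bsub>G\<^esub> y) \<one>\<^bsub>L\<^esub>) (act (inv\<^bsub>G\<^esub> y) \<one>\<^bsub>L\<^esub>)
          * tau y z \<one>\<^bsub>L\<^esub> * tau y z \<one>\<^bsub>L\<^esub>"
    by (rule ccd_compat[OF D yz L.one_closed L.one_closed])
  have "tau y z \<one>\<^bsub>L\<^esub> = tau y z \<one>\<^bsub>L\<^esub> * tau y z \<one>\<^bsub>L\<^esub>"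
    using c by (simp add: ccd_sig_u1[OF D] act_one[OF D] yz)
  moreover have "tau y z \<one>\<^bsub>L\<^esub> \<noteq> 0"
    by (rule ccd_tau_nz[OF D yz L.one_closed])
  ultimately show ?thesis by (rule sq_one[rotated])
qed

lemma km_mult:
  assumes "K_module L G sig I rho" "l \<in> carrier L" "m \<in> carrier L" "x \<in> carrier G" "y \<in> carrier G" "v \<in> vecs I"
  shows "mv I (rho l x) (mv I (rho m y) v) = (\<lambda>i. (if x = y then sig x l m else 0) * mv I (rho (l \<otimes>\<^bsub>L\<^esub> m) x) v i)"
proof -
  have "mv I (rho l x) (mv I (rho m y) v)
        = (if x = y then (\<lambda>i. sig x l m * mv I (rho (l \<otimes>\<^bsub>L\<^esub> m) x) v i) else (\<lambda>i. 0))"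
    using assms unfolding K_module_def by (elim conjE) blast
  then show ?thesis by (cases "x = y") simp_all
qed
lemma km_fin: "K_module L G sig I rho \<Longrightarrow> finite I"
  unfolding K_module_def by (elim conjE)
lemma km_unit: "K_module L G sig I rho \<Longrightarrow> v \<in> vecs I \<Longrightarrow> (\<lambda>i. \<Sum>x\<in>carrier G. mv I (rho \<one>\<^bsub>L\<^esub> x) v i) = v"
  unfolding K_module_def by (elim conjE) blast



lemma mv_matsum: "mv I (\<lambda>p q. \<Sum>y\<in>S. c y * M y p q) v = (\<lambda>i. \<Sum>y\<in>S. c y * mv I (M y) v i)"
proof (rule ext)
  fix i show "mv I (\<lambda>p q. \<Sum>y\<in>S. c y * M y p q) v i = (\<Sum>y\<in>S. c y * mv I (M y) v i)"
    by (cases "i \<in> I") (auto simp: mv_def sum_distrib_left sum_distrib_right mult.assoc intro: sum.swap)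
qed

lemma lin_span_sum:
  assumes "finite X" "\<forall>q\<in>X. g q \<in> S"
  shows "(\<lambda>p. \<Sum>q\<in>X. c q * g q p) \<in> lin_span S"
proof -
  define cc where "cc t = (\<Sum>q\<in>{q\<in>X. g q = t}. c q)" for t
  have "(\<lambda>p. \<Sum>q\<in>X. c q * g q p) = (\<lambda>p. \<Sum>t\<in>g ` X. cc t * t p)"
  proof (rule ext)
    fix p
    have "(\<Sum>q\<in>X. c q * g q p) = (\<Sum>t\<in>g ` X. \<Sum>q\<in>{q\<in>X. g q = t}. c q * g q p)"
      by (rule sum.image_gen[OF assms(1)])
    also have "\<dots> = (\<Sum>t\<in>g ` X. cc t * t p)"
      unfolding cc_def sum_distrib_right by (intro sum.cong refl) auto
    finally show "(\<Sum>q\<in>X. c q * g q p) = (\<Sum>t\<in>g ` X. cc t * t p)" .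
  qed
  then show ?thesis unfolding lin_span_def using assms by blast
qed

lemma kron_prod:
  assumes "finite I" "finite J"
  shows "mv (I\<times>J) (kron A B) (\<lambda>(i,j). u i * w j) = (\<lambda>(i,j). mv I A u i * mv J B w j)"
proof -
  have "mv J B (\<lambda>j'. u i' * w j') = (\<lambda>j. u i' * mv J B w j)" for i'
    by (rule mv_scale)
  moreover have "mv I A (\<lambda>i'. u i' * c) = (\<lambda>i. mv I A u i * c)" for c
    using mv_scale[of I A c u] by (simp add: mult.commute)
  ultimately show ?thesis by (simp add: kron_rw[OF assms])
qed

lemma ind_expand:
  assumes "finite I" "v \<in> vecs I"
  shows "(\<lambda>p. \<Sum>i\<in>I. v i * ind i p) = v"
proof (rule ext)
  fix p
  show "(\<Sum>i\<in>I. v i * ind i p) = v p"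
    using assms by (cases "p \<in> I") (auto simp: ind_def vecs_def if_distrib cong: if_cong)
qed

lemma kron_in_tensor:
  assumes fin: "finite I" "finite J" and w: "w \<in> vecs (I\<times>J)"
  shows "mv (I\<times>J) (kron A B) w \<in> tensor_sub (mv I A ` vecs I) (mv J B ` vecs J)"
proof -
  define g where "g q = (\<lambda>(i::'a,j::'b). mv I A (ind (fst q)) i * mv J B (ind (snd q)) j)" for q :: "'a \<times> 'b"
  have "mv (I\<times>J) (kron A B) w = mv (I\<times>J) (kron A B) (\<lambda>p. \<Sum>q\<in>I\<times>J. w q * ind q p)"
    using ind_expand[OF _ w] fin by simp
  also have "\<dots> = (\<lambda>p. \<Sum>q\<in>I\<times>J. w q * mv (I\<times>J) (kron A B) (ind q) p)"
    by (simp add: mv_sum mv_scale)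
  also have "\<dots> = (\<lambda>p. \<Sum>q\<in>I\<times>J. w q * g q p)"
  proof -
    have "mv (I\<times>J) (kron A B) (ind q) = mv (I\<times>J) (kron A B) (\<lambda>(i,j). ind (fst q) i * ind (snd q) j)" for q
      by (rule arg_cong[where f="mv (I\<times>J) (kron A B)"]) (cases q, auto simp: ind_def intro!: ext)
    then have "mv (I\<times>J) (kron A B) (ind q) = g q" for q
      unfolding g_def by (simp add: kron_prod[OF fin])
    then show ?thesis by simp
  qed
  finally have e: "mv (I\<times>J) (kron A B) w = (\<lambda>p. \<Sum>q\<in>I\<times>J. w q * g q p)" .
  have "\<forall>q\<in>I\<times>J. g q \<in> {(\<lambda>(i,j). u i * w j) | u w. u \<in> mv I A ` vecs I \<and> w \<in> mv J B ` vecs J}"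
  proof
    fix q assume "q \<in> I\<times>J"
    then have "ind (fst q) \<in> vecs I" "ind (snd q) \<in> vecs J" by (auto simp: ind_def vecs_def)
    then show "g q \<in> {(\<lambda>(i,j). u i * w j) | u w. u \<in> mv I A ` vecs I \<and> w \<in> mv J B ` vecs J}"
      unfolding g_def by blast
  qed
  then show ?thesis unfolding tensor_sub_def e
    using fin by (intro lin_span_sum) auto
qed

lemma tensor_sub_vecs:
  assumes "U \<subseteq> vecs I" "W \<subseteq> vecs J" "t \<in> tensor_sub U W"
  shows "t \<in> vecs (I\<times>J)"
proof -
  obtain T c where t: "t = (\<lambda>p. \<Sum>s\<in>T. c s * s p)" and T: "T \<subseteq> {(\<lambda>(i,j). u i * w j) | u w. u \<in> U \<and> w \<in> W}"
    using assms(3) unfolding tensor_sub_def lin_span_def by blast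
  have sz: "s p = 0" if sT: "s \<in> T" and pn: "p \<notin> I\<times>J" for s p
  proof -
    obtain u w where s: "s = (\<lambda>(i,j). u i * w j)" and uw: "u \<in> U" "w \<in> W"
      using T sT by blast
    obtain i j where p: "p = (i,j)" by (cases p)
    have "u i = 0 \<or> w j = 0" using pn uw assms(1,2) unfolding p vecs_def by auto
    then show ?thesis unfolding s p by auto
  qed
  have z: "(\<Sum>s\<in>T. c s * s p) = 0" if "p \<notin> I\<times>J" for p
    using that by (intro sum.neutral ballI) (simp add: sz)
  show ?thesis unfolding t vecs_def
  proof (intro CollectI allI impI)
    fix p assume "p \<notin> I \<times> J" then show "(\<Sum>s\<in>T. c s * s p) = 0" by (rule z)
  qed
qed



lemma sd1: "finite S \<Longrightarrow> a \<in> S \<Longrightarrow> (\<Sum>y\<in>S. (c y::'k::comm_ring_1) * ((if a = y then 1 else 0) * X)) = c a * X"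
proof -
  assume "finite S" "a \<in> S"
  have "(\<Sum>y\<in>S. (c y::'k::comm_ring_1) * ((if a = y then 1 else 0) * X)) = (\<Sum>y\<in>S. if a = y then c y * X else 0)"
    by (rule sum.cong) auto
  then show ?thesis using \<open>finite S\<close> \<open>a \<in> S\<close> by simp
qed
lemma sd2: "finite S \<Longrightarrow> a \<in> S \<Longrightarrow> (\<Sum>y\<in>S. ((if a = y then 1 else 0) * (f y::'k::comm_ring_1))) = f a"
proof -
  assume "finite S" "a \<in> S"
  have "(\<Sum>y\<in>S. ((if a = y then 1 else 0) * (f y::'k::comm_ring_1))) = (\<Sum>y\<in>S. if a = y then f y else 0)"
    by (rule sum.cong) auto
  then show ?thesis using \<open>finite S\<close> \<open>a \<in> S\<close> by simp
qed

lemma km_idem: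
  assumes K: "K_module L G sig I rho" and D: "crossed_coproduct_data L G act sig tau"
    and y: "y \<in> carrier G" and y': "y' \<in> carrier G" and u: "u \<in> vecs I"
  shows "mv I (rho \<one>\<^bsub>L\<^esub> y) (mv I (rho \<one>\<^bsub>L\<^esub> y') u) = (\<lambda>i. (if y = y' then 1 else 0) * mv I (rho \<one>\<^bsub>L\<^esub> y') u i)"
proof -
  have o: "\<one>\<^bsub>L\<^esub> \<in> carrier L"
    using ccd_grp[OF D] by (simp add: group.is_monoid monoid.one_closed)
  have oo: "\<one>\<^bsub>L\<^esub> \<otimes>\<^bsub>L\<^esub> \<one>\<^bsub>L\<^esub> = \<one>\<^bsub>L\<^esub>"
    using ccd_grp[OF D] o by (simp add: group.is_monoid monoid.l_one)
  show ?thesis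
  proof (cases "y = y'")
    case True
    then show ?thesis using km_mult[OF K o o y y' u] ccd_sig_u1[OF D y o] oo by simp
  next
    case False
    then show ?thesis using km_mult[OF K o o y y' u] by simp
  qed
qed

context
  fixes L :: "('l,'e1) monoid_scheme" and G :: "('g,'e2) monoid_scheme"
    and act :: "'g \<Rightarrow> 'l \<Rightarrow> 'l" and sig :: "'g \<Rightarrow> 'l \<Rightarrow> 'l \<Rightarrow> 'k::field"
    and tau :: "'g \<Rightarrow> 'g \<Rightarrow> 'l \<Rightarrow> 'k"
    and I :: "'a set" and rhoM :: "'l \<Rightarrow> 'g \<Rightarrow> 'a \<Rightarrow> 'a \<Rightarrow> 'k"
    and J :: "'b set" and rhoN :: "'l \<Rightarrow> 'g \<Rightarrow> 'b \<Rightarrow> 'b \<Rightarrow> 'k" and x :: 'g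
  assumes D: "crossed_coproduct_data L G act sig tau"
    and KM: "K_module L G sig I rhoM" and KN: "K_module L G sig J rhoN"
    and xG: "x \<in> carrier G"
begin

lemma grpG: "group G" and grpL: "group L"
  using ccd_grp[OF D] by auto

lemma oneL: "\<one>\<^bsub>L\<^esub> \<in> carrier L"
  using grpL by (simp add: group.is_monoid monoid.one_closed)

lemma finG: "finite (carrier G)" using ccd_grp[OF D] by auto

lemma finI: "finite I" and finJ: "finite J"
  using km_fin[OF KM] km_fin[OF KN] .

lemma zG: "y \<in> carrier G \<Longrightarrow> inv\<^bsub>G\<^esub> y \<otimes>\<^bsub>G\<^esub> x \<in> carrier G"
  using grpG xG by (simp add: group.inv_closed group.subgroupE(4) group.subgroup_self)

lemma invG: "y \<in> carrier G \<Longrightarrow> inv\<^bsub>G\<^esub> y \<in> carrier G"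
  using grpG by (simp add: group.inv_closed)

lemma zinj: "y \<in> carrier G \<Longrightarrow> y' \<in> carrier G \<Longrightarrow> (inv\<^bsub>G\<^esub> y \<otimes>\<^bsub>G\<^esub> x = inv\<^bsub>G\<^esub> y' \<otimes>\<^bsub>G\<^esub> x) = (y = y')"
proof -
  assume a: "y \<in> carrier G" "y' \<in> carrier G"
  interpret G: group G by (rule grpG)
  show ?thesis using a xG by (metis G.inv_closed G.inv_inv G.right_cancel)
qed

definition Kl where
  "Kl l y = mv (I\<times>J) (kron (rhoM l y) (rhoN (act (inv\<^bsub>G\<^esub> y) l) (inv\<^bsub>G\<^esub> y \<otimes>\<^bsub>G\<^esub> x)))"

definition E where "E y = mv (I\<times>J) (kron (rhoM \<one>\<^bsub>L\<^esub> y) (rhoN \<one>\<^bsub>L\<^esub> (inv\<^bsub>G\<^esub> y \<otimes>\<^bsub>G\<^esub> x)))"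

lemma E_Kl: "y \<in> carrier G \<Longrightarrow> Kl \<one>\<^bsub>L\<^esub> y = E y"
  unfolding Kl_def E_def using act_one[OF D invG] by simp

lemma T_expand:
  assumes l: "l \<in> carrier L"
  shows "mv (I\<times>J) (tensor_rho G act tau rhoM rhoN l x) w
       = (\<lambda>p. \<Sum>y\<in>carrier G. tau y (inv\<^bsub>G\<^esub> y \<otimes>\<^bsub>G\<^esub> x) l * Kl l y w p)"
proof -
  have "tensor_rho G act tau rhoM rhoN l x = (\<lambda>p q. \<Sum>y\<in>carrier G. tau y (inv\<^bsub>G\<^esub> y \<otimes>\<^bsub>G\<^esub> x) l
          * kron (rhoM l y) (rhoN (act (inv\<^bsub>G\<^esub> y) l) (inv\<^bsub>G\<^esub> y \<otimes>\<^bsub>G\<^esub> x)) p q)"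
  proof (intro ext)
    fix p q :: "'a \<times> 'b"
    show "tensor_rho G act tau rhoM rhoN l x p q = (\<Sum>y\<in>carrier G. tau y (inv\<^bsub>G\<^esub> y \<otimes>\<^bsub>G\<^esub> x) l
          * kron (rhoM l y) (rhoN (act (inv\<^bsub>G\<^esub> y) l) (inv\<^bsub>G\<^esub> y \<otimes>\<^bsub>G\<^esub> x)) p q)"
      by (cases p, cases q) (simp add: tensor_rho_def kron_def mult.assoc)
  qed
  then show ?thesis unfolding Kl_def by (simp add: mv_matsum)
qed

lemma T_one:
  "mv (I\<times>J) (tensor_rho G act tau rhoM rhoN \<one>\<^bsub>L\<^esub> x) w = (\<lambda>p. \<Sum>y\<in>carrier G. E y w p)"
proof -
  have "tau y (inv\<^bsub>G\<^esub> y \<otimes>\<^bsub>G\<^esub> x) \<one>\<^bsub>L\<^esub> * Kl \<one>\<^bsub>L\<^esub> y w p = E y w p" if "y \<in> carrier G" for y p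
    using that tau_one[OF D that zG[OF that]] E_Kl[OF that] by simp
  then show ?thesis
    using T_expand[OF oneL] by simp
qed

lemma Kl_comp:
  assumes l: "l \<in> carrier L" and m: "m \<in> carrier L" and y: "y \<in> carrier G" and y': "y' \<in> carrier G"
    and w: "w \<in> vecs (I\<times>J)"
  shows "Kl l y (Kl m y' w) = (\<lambda>p. (if y = y' then sig y l m * sig (inv\<^bsub>G\<^esub> y \<otimes>\<^bsub>G\<^esub> x) (act (inv\<^bsub>G\<^esub> y) l) (act (inv\<^bsub>G\<^esub> y) m) else 0)
        * Kl (l \<otimes>\<^bsub>L\<^esub> m) y w p)"
proof -
  have al: "act (inv\<^bsub>G\<^esub> y) l \<in> carrier L" using act_closed[OF D invG[OF y] l] .
  have am: "act (inv\<^bsub>G\<^esub> y') m \<in> carrier L" using act_closed[OF D invG[OF y'] m] .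
  have hA: "\<forall>v\<in>vecs I. mv I (rhoM l y) (mv I (rhoM m y') v)
       = (\<lambda>i. (if y = y' then sig y l m else 0) * mv I (rhoM (l \<otimes>\<^bsub>L\<^esub> m) y) v i)"
    using km_mult[OF KM l m y y'] by blast
  have hB: "\<forall>v\<in>vecs J. mv J (rhoN (act (inv\<^bsub>G\<^esub> y) l) (inv\<^bsub>G\<^esub> y \<otimes>\<^bsub>G\<^esub> x))
         (mv J (rhoN (act (inv\<^bsub>G\<^esub> y') m) (inv\<^bsub>G\<^esub> y' \<otimes>\<^bsub>G\<^esub> x)) v)
       = (\<lambda>i. (if inv\<^bsub>G\<^esub> y \<otimes>\<^bsub>G\<^esub> x = inv\<^bsub>G\<^esub> y' \<otimes>\<^bsub>G\<^esub> x
                then sig (inv\<^bsub>G\<^esub> y \<otimes>\<^bsub>G\<^esub> x) (act (inv\<^bsub>G\<^esub> y) l) (act (inv\<^bsub>G\<^esub> y') m) else 0)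
             * mv J (rhoN (act (inv\<^bsub>G\<^esub> y) l \<otimes>\<^bsub>L\<^esub> act (inv\<^bsub>G\<^esub> y') m) (inv\<^bsub>G\<^esub> y \<otimes>\<^bsub>G\<^esub> x)) v i)"
    using km_mult[OF KN al am zG[OF y] zG[OF y']] by blast
  have kc: "Kl l y (Kl m y' w) = (\<lambda>p. ((if y = y' then sig y l m else 0) *
       (if inv\<^bsub>G\<^esub> y \<otimes>\<^bsub>G\<^esub> x = inv\<^bsub>G\<^esub> y' \<otimes>\<^bsub>G\<^esub> x
                then sig (inv\<^bsub>G\<^esub> y \<otimes>\<^bsub>G\<^esub> x) (act (inv\<^bsub>G\<^esub> y) l) (act (inv\<^bsub>G\<^esub> y') m) else 0))
       * mv (I\<times>J) (kron (rhoM (l \<otimes>\<^bsub>L\<^esub> m) y) (rhoN (act (inv\<^bsub>G\<^esub> y) l \<otimes>\<^bsub>L\<^esub> act (inv\<^bsub>G\<^esub> y') m) (inv\<^bsub>G\<^esub> y \<otimes>\<^bsub>G\<^esub> x))) w p)"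
    unfolding Kl_def by (rule kron_comp[OF finI finJ hA hB w])
  show ?thesis
  proof (cases "y = y'")
    case True
    have "act (inv\<^bsub>G\<^esub> y) l \<otimes>\<^bsub>L\<^esub> act (inv\<^bsub>G\<^esub> y) m = act (inv\<^bsub>G\<^esub> y) (l \<otimes>\<^bsub>L\<^esub> m)"
      using group_hom.hom_mult[OF ccd_gh[OF D invG[OF y]] l m] by simp
    then show ?thesis using kc True unfolding Kl_def by simp
  next
    case False
    then show ?thesis using kc by simp
  qed
qed

lemma E_E:
  assumes y: "y \<in> carrier G" and y': "y' \<in> carrier G" and w: "w \<in> vecs (I\<times>J)"
  shows "E y (E y' w) = (\<lambda>p. (if y = y' then 1 else 0) * E y w p)"
proof -
  have o: "\<one>\<^bsub>L\<^esub> \<in> carrier L" using oneL .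
  show ?thesis
    by (simp only: E_Kl[OF y, symmetric] E_Kl[OF y', symmetric] Kl_comp[OF o o y y' w] act_one[OF D invG[OF y]]
      ccd_sig_u1[OF D y o] ccd_sig_u1[OF D zG[OF y] o] monoid.l_one[OF group.is_monoid[OF grpL] o] mult_1_left)
qed

lemma E_Kl_comp:
  assumes l: "l \<in> carrier L" and y: "y \<in> carrier G" and y': "y' \<in> carrier G" and w: "w \<in> vecs (I\<times>J)"
  shows "E y (Kl l y' w) = (\<lambda>p. (if y = y' then 1 else 0) * Kl l y w p)"
proof -
  have o: "\<one>\<^bsub>L\<^esub> \<in> carrier L" using oneL .
  show ?thesis
    by (simp only: E_Kl[OF y, symmetric] Kl_comp[OF o l y y' w] act_one[OF D invG[OF y]]
      ccd_sig_u1[OF D y l] ccd_sig_u1[OF D zG[OF y] act_closed[OF D invG[OF y] l]] monoid.l_one[OF group.is_monoid[OF grpL] l] mult_1_left)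
qed

lemma Kl_E_comp:
  assumes l: "l \<in> carrier L" and y: "y \<in> carrier G" and w: "w \<in> vecs (I\<times>J)"
  shows "Kl l y (E y w) = Kl l y w"
proof -
  have o: "\<one>\<^bsub>L\<^esub> \<in> carrier L" using oneL .
  show ?thesis
    using Kl_comp[OF l o y y w] E_Kl[OF y] act_one[OF D invG[OF y]]
      ccd_sig_u2[OF D y l] ccd_sig_u2[OF D zG[OF y] act_closed[OF D invG[OF y] l]] monoid.r_one[OF group.is_monoid[OF grpL] l]
    by simp
qed

lemma E_tensor:
  assumes y: "y \<in> carrier G" and y': "y' \<in> carrier G"
    and t: "t \<in> tensor_sub (comp_space L I rhoM y') (comp_space L J rhoN (inv\<^bsub>G\<^esub> y' \<otimes>\<^bsub>G\<^esub> x))"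
  shows "E y t = (\<lambda>p. (if y = y' then 1 else 0) * t p)"
proof -
  obtain T c where tT: "t = (\<lambda>p. \<Sum>s\<in>T. c s * s p)"
    and T: "T \<subseteq> {(\<lambda>(i,j). u i * w j) | u w. u \<in> comp_space L I rhoM y' \<and> w \<in> comp_space L J rhoN (inv\<^bsub>G\<^esub> y' \<otimes>\<^bsub>G\<^esub> x)}"
    using t unfolding tensor_sub_def lin_span_def by blast
  have es: "E y s = (\<lambda>p. (if y = y' then 1 else 0) * s p)" if sT: "s \<in> T" for s
  proof -
    obtain u w where s: "s = (\<lambda>(i,j). u i * w j)" and u: "u \<in> comp_space L I rhoM y'"
      and w: "w \<in> comp_space L J rhoN (inv\<^bsub>G\<^esub> y' \<otimes>\<^bsub>G\<^esub> x)"
      using T sT by blast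
    obtain u0 where u0: "u0 \<in> vecs I" "u = mv I (rhoM \<one>\<^bsub>L\<^esub> y') u0"
      using u unfolding comp_space_def by blast
    obtain w0 where w0: "w0 \<in> vecs J" "w = mv J (rhoN \<one>\<^bsub>L\<^esub> (inv\<^bsub>G\<^esub> y' \<otimes>\<^bsub>G\<^esub> x)) w0"
      using w unfolding comp_space_def by blast
    have Pu: "mv I (rhoM \<one>\<^bsub>L\<^esub> y) u = (\<lambda>i. (if y = y' then 1 else 0) * u i)"
      unfolding u0(2) by (rule km_idem[OF KM D y y' u0(1)])
    have Qw: "mv J (rhoN \<one>\<^bsub>L\<^esub> (inv\<^bsub>G\<^esub> y \<otimes>\<^bsub>G\<^esub> x)) w = (\<lambda>i. (if y = y' then 1 else 0) * w i)"
      unfolding w0(2) using km_idem[OF KN D zG[OF y] zG[OF y'] w0(1)] zinj[OF y y'] by simp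
    have "E y s = (\<lambda>(i,j). mv I (rhoM \<one>\<^bsub>L\<^esub> y) u i * mv J (rhoN \<one>\<^bsub>L\<^esub> (inv\<^bsub>G\<^esub> y \<otimes>\<^bsub>G\<^esub> x)) w j)"
      unfolding E_def s by (rule kron_prod[OF finI finJ])
    then show ?thesis unfolding Pu Qw s by (cases "y = y'") (auto intro!: ext)
  qed
  have "E y t = (\<lambda>p. \<Sum>s\<in>T. c s * E y s p)"
    unfolding tT E_def by (simp add: mv_sum mv_scale)
  also have "\<dots> = (\<lambda>p. \<Sum>s\<in>T. c s * ((if y = y' then 1 else 0) * s p))"
    using es by (intro ext sum.cong) auto
  also have "\<dots> = (\<lambda>p. (if y = y' then 1 else 0) * t p)"
    unfolding tT by (simp add: sum_distrib_left mult.left_commute)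
  finally show ?thesis .
qed

lemma comp_vecs: "comp_space L I rhoM y \<subseteq> vecs I" "comp_space L J rhoN y \<subseteq> vecs J"
  unfolding comp_space_def using mv_vecs by auto

lemma part1:
  "tw_iso (carrier L)
           (comp_space L (I \<times> J) (tensor_rho G act tau rhoM rhoN) x)
           (comp_act (I \<times> J) (tensor_rho G act tau rhoM rhoN) x)
           (sum_space L G I J rhoM rhoN x)
           (sum_act G act tau I J rhoM rhoN x)"
proof -
  define F where "F w = (\<lambda>(y,p). if y \<in> carrier G then E y w p else 0)" for w
  define V where "V = comp_space L (I \<times> J) (tensor_rho G act tau rhoM rhoN) x"
  define W where "W = sum_space L G I J rhoM rhoN x"
  have Fy: "(\<lambda>p. F w (y,p)) = E y w" if "y \<in> carrier G" for w y
    using that unfolding F_def by simp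
  have Vv: "V \<subseteq> vecs (I\<times>J)" unfolding V_def comp_space_def using mv_vecs by auto
  have EV: "E y v = E y w0" if "y \<in> carrier G" "w0 \<in> vecs (I\<times>J)"
      "v = mv (I\<times>J) (tensor_rho G act tau rhoM rhoN \<one>\<^bsub>L\<^esub> x) w0" for y v w0
  proof -
    have "E y v = (\<lambda>p. \<Sum>y'\<in>carrier G. E y (E y' w0) p)"
      unfolding that(3) T_one E_def by (simp add: mv_sum)
    also have "\<dots> = (\<lambda>p. \<Sum>y'\<in>carrier G. (if y = y' then 1 else 0) * E y w0 p)"
      using E_E[OF that(1) _ that(2)] by simp
    also have "\<dots> = E y w0"
      using sd2[OF finG that(1), where f="\<lambda>_. E y w0 p" for p] by simp
    finally show ?thesis .
  qed
  have Vdec: "(\<lambda>p. \<Sum>y\<in>carrier G. E y v p) = v" if vV: "v \<in> V" for v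
  proof -
    obtain w0 where w0: "w0 \<in> vecs (I\<times>J)" "v = mv (I\<times>J) (tensor_rho G act tau rhoM rhoN \<one>\<^bsub>L\<^esub> x) w0"
      using vV unfolding V_def comp_space_def by blast
    have "(\<lambda>p. \<Sum>y\<in>carrier G. E y v p) = (\<lambda>p. \<Sum>y\<in>carrier G. E y w0 p)"
      using EV[OF _ w0] by simp
    also have "\<dots> = v" using w0(2) T_one by simp
    finally show ?thesis .
  qed
  have lin: "lin_on V F"
    unfolding lin_on_def F_def E_def by (auto simp: mv_add mv_scale intro!: ext)
  have inj: "inj_on F V"
  proof (rule inj_onI)
    fix v1 v2 assume v: "v1 \<in> V" "v2 \<in> V" and e: "F v1 = F v2"
    have "E y v1 = E y v2" if "y \<in> carrier G" for y
      using Fy[OF that, of v1] Fy[OF that, of v2] e by simp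
    then have "(\<lambda>p. \<Sum>y\<in>carrier G. E y v1 p) = (\<lambda>p. \<Sum>y\<in>carrier G. E y v2 p)" by simp
    then show "v1 = v2" using Vdec[OF v(1)] Vdec[OF v(2)] by simp
  qed
  have sub: "F ` V \<subseteq> W"
  proof
    fix s assume "s \<in> F ` V"
    then obtain v where v: "v \<in> V" "s = F v" by blast
    have "(\<lambda>p. s (y,p)) \<in> tensor_sub (comp_space L I rhoM y) (comp_space L J rhoN (inv\<^bsub>G\<^esub> y \<otimes>\<^bsub>G\<^esub> x))"
      if "y \<in> carrier G" for y
      using Fy[OF that, of v] kron_in_tensor[OF finI finJ, of v] Vv v
      unfolding E_def comp_space_def v(2) by auto
    moreover have "s (y,p) = 0" if "y \<notin> carrier G" for y p
      using that unfolding v(2) F_def by simp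
    ultimately show "s \<in> W" unfolding W_def sum_space_def by blast
  qed
  have sup: "W \<subseteq> F ` V"
  proof
    fix s assume "s \<in> W"
    then have s0: "\<And>y p. y \<notin> carrier G \<Longrightarrow> s (y,p) = 0"
      and st: "\<And>y. y \<in> carrier G \<Longrightarrow> (\<lambda>p. s (y,p)) \<in> tensor_sub (comp_space L I rhoM y) (comp_space L J rhoN (inv\<^bsub>G\<^esub> y \<otimes>\<^bsub>G\<^esub> x))"
      unfolding W_def sum_space_def by blast+
    define v where "v = (\<lambda>p. \<Sum>y\<in>carrier G. s (y,p))"
    have Ev: "E y v = (\<lambda>p. s (y,p))" if "y \<in> carrier G" for y
    proof -
      have "E y v = (\<lambda>p. \<Sum>y'\<in>carrier G. E y (\<lambda>p. s (y',p)) p)"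
        unfolding v_def E_def by (simp add: mv_sum)
      also have "\<dots> = (\<lambda>p. \<Sum>y'\<in>carrier G. (if y = y' then 1 else 0) * s (y',p))"
        using E_tensor[OF that _ st] by simp
      also have "\<dots> = (\<lambda>p. s (y,p))"
        by (rule ext, rule sd2[OF finG that])
      finally show ?thesis .
    qed
    have vv: "v \<in> vecs (I\<times>J)"
    proof -
      have "(\<lambda>p. s (y,p)) \<in> vecs (I\<times>J)" if "y \<in> carrier G" for y
        using tensor_sub_vecs[OF comp_vecs st[OF that]] .
      then show ?thesis unfolding v_def vecs_def by auto
    qed
    have "mv (I\<times>J) (tensor_rho G act tau rhoM rhoN \<one>\<^bsub>L\<^esub> x) v = v"
      unfolding T_one using Ev unfolding v_def by simp
    then have vV: "v \<in> V" unfolding V_def comp_space_def using vv by (metis image_eqI)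
    have "F v = s"
    proof (rule ext, clarify)
      fix y p show "F v (y,p) = s (y,p)"
        using Ev s0 unfolding F_def by (cases "y \<in> carrier G") (auto dest: fun_cong)
    qed
    then show "s \<in> F ` V" using vV by blast
  qed
  have intw: "F (comp_act (I \<times> J) (tensor_rho G act tau rhoM rhoN) x l v) = sum_act G act tau I J rhoM rhoN x l (F v)"
    if l: "l \<in> carrier L" and v: "v \<in> V" for l v
  proof (rule ext, clarify)
    fix y p
    have vv: "v \<in> vecs (I\<times>J)" using v Vv by auto
    show "F (comp_act (I \<times> J) (tensor_rho G act tau rhoM rhoN) x l v) (y,p) = sum_act G act tau I J rhoM rhoN x l (F v) (y,p)"
    proof (cases "y \<in> carrier G")
      case False then show ?thesis unfolding F_def sum_act_def by simp
    next
      case y: True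
      have "F (comp_act (I \<times> J) (tensor_rho G act tau rhoM rhoN) x l v) (y,p)
          = (\<Sum>y'\<in>carrier G. tau y' (inv\<^bsub>G\<^esub> y' \<otimes>\<^bsub>G\<^esub> x) l * E y (Kl l y' v) p)"
        unfolding F_def comp_act_def T_expand[OF l] using y by (simp add: E_def mv_sum mv_scale)
      also have "\<dots> = (\<Sum>y'\<in>carrier G. tau y' (inv\<^bsub>G\<^esub> y' \<otimes>\<^bsub>G\<^esub> x) l * ((if y = y' then 1 else 0) * Kl l y v p))"
        using E_Kl_comp[OF l y _ vv] by simp
      also have "\<dots> = tau y (inv\<^bsub>G\<^esub> y \<otimes>\<^bsub>G\<^esub> x) l * Kl l y v p"
        by (rule sd1[OF finG y])
      also have "\<dots> = tau y (inv\<^bsub>G\<^esub> y \<otimes>\<^bsub>G\<^esub> x) l * Kl l y (E y v) p"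
        using Kl_E_comp[OF l y vv] by simp
      also have "\<dots> = sum_act G act tau I J rhoM rhoN x l (F v) (y,p)"
        unfolding sum_act_def Kl_def using y by (simp add: Fy[OF y])
      finally show ?thesis .
    qed
  qed
  show ?thesis
    unfolding tw_iso_def
    apply (rule exI[of _ F])
    using lin inj sub sup intw unfolding V_def[symmetric] W_def[symmetric] bij_betw_def by blast
qed

end


lemma pair_transpose:
  "(\<Sum>i\<in>I. mv I (\<lambda>i j. c * A j i) v i * u i) = c * (\<Sum>j\<in>I. v j * mv I A u j)"
proof -
  have "(\<Sum>i\<in>I. mv I (\<lambda>i j. c * A j i) v i * u i) = (\<Sum>i\<in>I. \<Sum>j\<in>I. c * (v j * (A j i * u i)))"
    by (auto simp: mv_def sum_distrib_right mult.assoc mult.left_commute intro!: sum.cong)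
  also have "\<dots> = (\<Sum>j\<in>I. \<Sum>i\<in>I. c * (v j * (A j i * u i)))"
    by (rule sum.swap)
  also have "\<dots> = c * (\<Sum>j\<in>I. v j * mv I A u j)"
    by (auto simp: mv_def sum_distrib_left intro!: sum.cong)
  finally show ?thesis .
qed

lemma mv_ind: "finite I \<Longrightarrow> j \<in> I \<Longrightarrow> mv I A (ind j) k = (if k \<in> I then A k j else 0)"
proof -
  assume fin: "finite I" and j: "j \<in> I"
  have "(\<Sum>m\<in>I. A k m * ind j m) = (\<Sum>m\<in>I. if m = j then A k m else 0)"
    by (rule sum.cong) (auto simp: ind_def)
  then show ?thesis using j fin by (simp add: mv_def)
qed

context
  fixes L :: "('l,'e1) monoid_scheme" and G :: "('g,'e2) monoid_scheme"
    and act :: "'g \<Rightarrow> 'l \<Rightarrow> 'l" and sig :: "'g \<Rightarrow> 'l \<Rightarrow> 'l \<Rightarrow> 'k::field"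
    and tau :: "'g \<Rightarrow> 'g \<Rightarrow> 'l \<Rightarrow> 'k"
    and I :: "'a set" and rhoM :: "'l \<Rightarrow> 'g \<Rightarrow> 'a \<Rightarrow> 'a \<Rightarrow> 'k" and x :: 'g
  assumes D: "crossed_coproduct_data L G act sig tau"
    and KM: "K_module L G sig I rhoM"
    and xG: "x \<in> carrier G"
begin

lemma grpG2: "group G" and grpL2: "group L"
  using ccd_grp[OF D] by auto

lemma oneL2: "\<one>\<^bsub>L\<^esub> \<in> carrier L"
  using grpL2 by (simp add: group.is_monoid monoid.one_closed)

lemma xiG: "inv\<^bsub>G\<^esub> x \<in> carrier G"
  using grpG2 xG by (simp add: group.inv_closed)

lemma finI2: "finite I" using km_fin[OF KM] .

lemma scalar_id:
  assumes l: "l \<in> carrier L"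
  shows "tau x (inv\<^bsub>G\<^esub> x) (inv\<^bsub>L\<^esub> l) * sig x (inv\<^bsub>L\<^esub> l) l
       = inverse (tau x (inv\<^bsub>G\<^esub> x) l) * inverse (sig (inv\<^bsub>G\<^esub> x) (act (inv\<^bsub>G\<^esub> x) (inv\<^bsub>L\<^esub> l)) (act (inv\<^bsub>G\<^esub> x) l))"
proof -
  interpret G: group G by (rule grpG2)
  interpret L: group L by (rule grpL2)
  have il: "inv\<^bsub>L\<^esub> l \<in> carrier L" using l by simp
  have c: "sig (x \<otimes>\<^bsub>G\<^esub> inv\<^bsub>G\<^esub> x) (inv\<^bsub>L\<^esub> l) l * tau x (inv\<^bsub>G\<^esub> x) (inv\<^bsub>L\<^esub> l \<otimes>\<^bsub>L\<^esub> l)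
     = sig x (inv\<^bsub>L\<^esub> l) l * sig (inv\<^bsub>G\<^esub> x) (act (inv\<^bsub>G\<^esub> x) (inv\<^bsub>L\<^esub> l)) (act (inv\<^bsub>G\<^esub> x) l)
       * tau x (inv\<^bsub>G\<^esub> x) (inv\<^bsub>L\<^esub> l) * tau x (inv\<^bsub>G\<^esub> x) l"
    by (rule ccd_compat[OF D xG xiG il l])
  have "x \<otimes>\<^bsub>G\<^esub> inv\<^bsub>G\<^esub> x = \<one>\<^bsub>G\<^esub>" using xG by simp
  moreover have "inv\<^bsub>L\<^esub> l \<otimes>\<^bsub>L\<^esub> l = \<one>\<^bsub>L\<^esub>" using l by simp
  ultimately have c2: "1 = sig x (inv\<^bsub>L\<^esub> l) l * sig (inv\<^bsub>G\<^esub> x) (act (inv\<^bsub>G\<^esub> x) (inv\<^bsub>L\<^esub> l)) (act (inv\<^bsub>G\<^esub> x) l)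
       * tau x (inv\<^bsub>G\<^esub> x) (inv\<^bsub>L\<^esub> l) * tau x (inv\<^bsub>G\<^esub> x) l"
    using c sig_one[OF D il l] tau_one[OF D xG xiG] by simp
  have n1: "tau x (inv\<^bsub>G\<^esub> x) l \<noteq> 0" by (rule ccd_tau_nz[OF D xG xiG l])
  have n2: "sig (inv\<^bsub>G\<^esub> x) (act (inv\<^bsub>G\<^esub> x) (inv\<^bsub>L\<^esub> l)) (act (inv\<^bsub>G\<^esub> x) l) \<noteq> 0"
    by (rule ccd_sig_nz[OF D xiG act_closed[OF D xiG il] act_closed[OF D xiG l]])
  show ?thesis using c2 n1 n2 by (simp add: field_simps)
qed

lemma part2:
  "tw_iso (carrier L)
           (comp_space L I (dual_rho L G act sig tau rhoM) x)
           (comp_act I (dual_rho L G act sig tau rhoM) x)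
           (dual_space (comp_space L I rhoM (inv\<^bsub>G\<^esub> x)))
           (conj_dual_act L G act sig tau I rhoM x)"
proof -
  interpret G: group G by (rule grpG2)
  interpret L: group L by (rule grpL2)
  define U where "U = comp_space L I rhoM (inv\<^bsub>G\<^esub> x)"
  define V where "V = comp_space L I (dual_rho L G act sig tau rhoM) x"
  define fd where "fd v = (\<lambda>u. if u \<in> U then (\<Sum>i\<in>I. v i * u i) else 0)" for v :: "'a \<Rightarrow> 'k"
  have Pfix: "mv I (rhoM \<one>\<^bsub>L\<^esub> (inv\<^bsub>G\<^esub> x)) u = u" if "u \<in> U" for u
  proof -
    obtain u0 where u0: "u0 \<in> vecs I" "u = mv I (rhoM \<one>\<^bsub>L\<^esub> (inv\<^bsub>G\<^esub> x)) u0"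
      using \<open>u \<in> U\<close> unfolding U_def comp_space_def by blast
    show ?thesis unfolding u0(2) using km_idem[OF KM D xiG xiG u0(1)] by simp
  qed
  have Uv: "U \<subseteq> vecs I" unfolding U_def comp_space_def using mv_vecs by auto
  have PU: "mv I (rhoM \<one>\<^bsub>L\<^esub> (inv\<^bsub>G\<^esub> x)) w \<in> U" if "w \<in> vecs I" for w
    using that unfolding U_def comp_space_def by blast
  have Ufix: "w \<in> U" if "w \<in> vecs I" "mv I (rhoM \<one>\<^bsub>L\<^esub> (inv\<^bsub>G\<^esub> x)) w = w" for w
    using PU[OF that(1)] that(2) by simp
  have Ucomb: "(\<lambda>p. \<Sum>s\<in>S. c s * g s p) \<in> U" if gS: "\<forall>s\<in>S. g s \<in> U" for S c g
  proof (rule Ufix)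
    show "(\<lambda>p. \<Sum>s\<in>S. c s * g s p) \<in> vecs I"
      unfolding vecs_def
    proof (intro CollectI allI impI)
      fix i assume "i \<notin> I"
      then have "\<forall>s\<in>S. g s i = 0" using gS Uv unfolding vecs_def by blast
      then show "(\<Sum>s\<in>S. c s * g s i) = 0" by simp
    qed
    show "mv I (rhoM \<one>\<^bsub>L\<^esub> (inv\<^bsub>G\<^esub> x)) (\<lambda>p. \<Sum>s\<in>S. c s * g s p) = (\<lambda>p. \<Sum>s\<in>S. c s * g s p)"
      using that Pfix by (simp add: mv_sum mv_scale)
  qed
  have Uadd: "(\<lambda>p. u p + w p) \<in> U" if "u \<in> U" "w \<in> U" for u w
  proof (rule Ufix)
    have "u \<in> vecs I" "w \<in> vecs I" using that Uv by auto
    then show "(\<lambda>p. u p + w p) \<in> vecs I" by (simp add: vecs_def)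
    show "mv I (rhoM \<one>\<^bsub>L\<^esub> (inv\<^bsub>G\<^esub> x)) (\<lambda>p. u p + w p) = (\<lambda>p. u p + w p)"
      using that Pfix by (simp add: mv_add)
  qed
  have Uscale: "(\<lambda>p. c * u p) \<in> U" if "u \<in> U" for u c
  proof (rule Ufix)
    have "u \<in> vecs I" using that Uv by auto
    then show "(\<lambda>p. c * u p) \<in> vecs I" by (simp add: vecs_def)
    show "mv I (rhoM \<one>\<^bsub>L\<^esub> (inv\<^bsub>G\<^esub> x)) (\<lambda>p. c * u p) = (\<lambda>p. c * u p)"
      using that Pfix by (simp add: mv_scale)
  qed
  have D1: "dual_rho L G act sig tau rhoM \<one>\<^bsub>L\<^esub> x = (\<lambda>i j. 1 * rhoM \<one>\<^bsub>L\<^esub> (inv\<^bsub>G\<^esub> x) j i)"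
    unfolding dual_rho_def using tau_one[OF D xG xiG] ccd_sig_u1[OF D xG oneL2] act_one[OF D xiG] by simp
  have Vv: "V \<subseteq> vecs I" unfolding V_def comp_space_def using mv_vecs by auto
  have indv: "ind j \<in> vecs I" if "j \<in> I" for j
    using that unfolding vecs_def ind_def by auto
  have fval: "v j = fd v (mv I (rhoM \<one>\<^bsub>L\<^esub> (inv\<^bsub>G\<^esub> x)) (ind j))" if v: "v \<in> V" and j: "j \<in> I" for v j
  proof -
    obtain v0 where v0: "v0 \<in> vecs I" "v = mv I (dual_rho L G act sig tau rhoM \<one>\<^bsub>L\<^esub> x) v0"
      using v unfolding V_def comp_space_def by blast
    have "fd v (mv I (rhoM \<one>\<^bsub>L\<^esub> (inv\<^bsub>G\<^esub> x)) (ind j))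
        = (\<Sum>i\<in>I. v i * mv I (rhoM \<one>\<^bsub>L\<^esub> (inv\<^bsub>G\<^esub> x)) (ind j) i)"
      unfolding fd_def using PU[OF indv[OF j]] by simp
    also have "\<dots> = 1 * (\<Sum>k\<in>I. v0 k * mv I (rhoM \<one>\<^bsub>L\<^esub> (inv\<^bsub>G\<^esub> x)) (mv I (rhoM \<one>\<^bsub>L\<^esub> (inv\<^bsub>G\<^esub> x)) (ind j)) k)"
      unfolding v0(2) D1 by (rule pair_transpose)
    also have "\<dots> = (\<Sum>k\<in>I. v0 k * mv I (rhoM \<one>\<^bsub>L\<^esub> (inv\<^bsub>G\<^esub> x)) (ind j) k)"
      using Pfix[OF PU[OF indv[OF j]]] by simp
    also have "\<dots> = (\<Sum>k\<in>I. v0 k * rhoM \<one>\<^bsub>L\<^esub> (inv\<^bsub>G\<^esub> x) k j)"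
      by (intro sum.cong) (simp_all add: mv_ind[OF finI2 j])
    also have "\<dots> = v j"
      unfolding v0(2) D1 using j by (simp add: mv_def mult.commute)
    finally show ?thesis by simp
  qed
  have lin: "lin_on V fd"
    unfolding lin_on_def fd_def by (auto simp: distrib_left distrib_right sum.distrib sum_distrib_left mult.assoc intro!: ext)
  have inj: "inj_on fd V"
  proof (rule inj_onI)
    fix v1 v2 assume v: "v1 \<in> V" "v2 \<in> V" and e: "fd v1 = fd v2"
    show "v1 = v2"
    proof (rule ext)
      fix j show "v1 j = v2 j"
      proof (cases "j \<in> I")
        case True then show ?thesis using fval[OF v(1) True] fval[OF v(2) True] e by simp
      next
        case False
        have "v1 \<in> vecs I" "v2 \<in> vecs I" using v Vv by auto
        then show ?thesis using False by (simp add: vecs_def)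
      qed
    qed
  qed
  have sub: "fd ` V \<subseteq> dual_space U"
  proof
    fix f assume "f \<in> fd ` V"
    then obtain v where f: "f = fd v" by blast
    show "f \<in> dual_space U"
      unfolding dual_space_def lin_functional_def f
      using Uadd Uscale
      by (auto simp: fd_def distrib_left distrib_right sum.distrib sum_distrib_left mult.left_commute)
  qed
  have sup: "dual_space U \<subseteq> fd ` V"
  proof
    fix phi assume phi: "phi \<in> dual_space U"
    have pz: "phi u = 0" if "u \<notin> U" for u using phi that unfolding dual_space_def by blast
    have padd: "phi (\<lambda>p. u p + w p) = phi u + phi w" if "u \<in> U" "w \<in> U" for u w
      using phi that unfolding dual_space_def lin_functional_def by blast
    have pscale: "phi (\<lambda>p. c * u p) = c * phi u" if "u \<in> U" for u c
      using phi that unfolding dual_space_def lin_functional_def by blast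
    have psum: "phi (\<lambda>p. \<Sum>s\<in>S. c s * g s p) = (\<Sum>s\<in>S. c s * phi (g s))"
      if "finite S" "\<forall>s\<in>S. g s \<in> U" for S c g
      using that
    proof (induction S rule: finite_induct)
      case empty
      have u0: "mv I (rhoM \<one>\<^bsub>L\<^esub> (inv\<^bsub>G\<^esub> x)) (\<lambda>p. 0) \<in> U"
        by (rule PU) (simp add: vecs_def)
      have "phi (\<lambda>p. 0 * mv I (rhoM \<one>\<^bsub>L\<^esub> (inv\<^bsub>G\<^esub> x)) (\<lambda>p. 0) p) = 0 * phi (mv I (rhoM \<one>\<^bsub>L\<^esub> (inv\<^bsub>G\<^esub> x)) (\<lambda>p. 0))"
        by (rule pscale[OF u0])
      then show ?case by simp
    next
      case (insert a S)
      have "phi (\<lambda>p. \<Sum>s\<in>insert a S. c s * g s p) = phi (\<lambda>p. c a * g a p + (\<Sum>s\<in>S. c s * g s p))"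
        using insert.hyps by simp
      also have "\<dots> = phi (\<lambda>p. c a * g a p) + phi (\<lambda>p. \<Sum>s\<in>S. c s * g s p)"
        using insert.prems by (intro padd Uscale Ucomb) auto
      also have "\<dots> = c a * phi (g a) + (\<Sum>s\<in>S. c s * phi (g s))"
        using insert.prems insert.IH pscale by simp
      finally show ?case using insert.hyps by simp
    qed
    define P where "P = rhoM \<one>\<^bsub>L\<^esub> (inv\<^bsub>G\<^esub> x)"
    define v where "v j = (if j \<in> I then phi (mv I P (ind j)) else 0)" for j
    have PeU: "mv I P (ind j) \<in> U" if "j \<in> I" for j unfolding P_def by (rule PU[OF indv[OF that]])
    have vv: "v \<in> vecs I" unfolding v_def vecs_def by auto
    have comb: "(\<lambda>p. \<Sum>i\<in>I. w i * mv I P (ind i) p) = mv I P w" if "w \<in> vecs I" for w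
    proof -
      have "(\<lambda>p. \<Sum>i\<in>I. w i * mv I P (ind i) p) = mv I P (\<lambda>p. \<Sum>i\<in>I. w i * ind i p)"
        by (simp add: mv_sum mv_scale)
      also have "\<dots> = mv I P w" using ind_expand[OF finI2 that] by simp
      finally show ?thesis .
    qed
    have phiv: "(\<Sum>i\<in>I. v i * w i) = phi (mv I P w)" if "w \<in> vecs I" for w
    proof -
      have "phi (mv I P w) = phi (\<lambda>p. \<Sum>i\<in>I. w i * mv I P (ind i) p)" using comb[OF that] by simp
      also have "\<dots> = (\<Sum>i\<in>I. w i * phi (mv I P (ind i)))"
        using PeU by (intro psum finI2) auto
      also have "\<dots> = (\<Sum>i\<in>I. v i * w i)" unfolding v_def by (auto intro!: sum.cong)
      finally show ?thesis by simp
    qed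
    have vV: "v \<in> V"
    proof -
      have "mv I (dual_rho L G act sig tau rhoM \<one>\<^bsub>L\<^esub> x) v = v"
      proof (rule ext)
        fix j show "mv I (dual_rho L G act sig tau rhoM \<one>\<^bsub>L\<^esub> x) v j = v j"
        proof (cases "j \<in> I")
          case False then show ?thesis unfolding D1 mv_def v_def by simp
        next
          case j: True
          have "mv I (dual_rho L G act sig tau rhoM \<one>\<^bsub>L\<^esub> x) v j = (\<Sum>i\<in>I. rhoM \<one>\<^bsub>L\<^esub> (inv\<^bsub>G\<^esub> x) i j * v i)"
            using j by (simp add: D1 mv_def)
          also have "\<dots> = (\<Sum>i\<in>I. v i * mv I P (ind j) i)"
            by (intro sum.cong) (simp_all add: mv_ind[OF finI2 j] P_def mult.commute)
          also have "\<dots> = phi (mv I P (mv I P (ind j)))"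
            by (rule phiv[OF mv_vecs])
          also have "\<dots> = phi (mv I P (ind j))"
            using Pfix[OF PeU[OF j]] unfolding P_def by simp
          also have "\<dots> = v j" unfolding v_def using j by simp
          finally show ?thesis .
        qed
      qed
      then show ?thesis unfolding V_def comp_space_def using vv by (metis image_eqI)
    qed
    have "fd v = phi"
    proof (rule ext)
      fix u show "fd v u = phi u"
      proof (cases "u \<in> U")
        case False then show ?thesis unfolding fd_def using pz by simp
      next
        case True
        have "fd v u = phi (mv I P u)" unfolding fd_def using True Uv phiv by auto
        also have "\<dots> = phi u" using Pfix[OF True] unfolding P_def by simp
        finally show ?thesis .
      qed
    qed
    then show "phi \<in> fd ` V" using vV by blast
  qed
  have intw: "fd (comp_act I (dual_rho L G act sig tau rhoM) x l v) = conj_dual_act L G act sig tau I rhoM x l (fd v)"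
    if l: "l \<in> carrier L" and v: "v \<in> V" for l v
  proof (rule ext)
    fix u
    define m where "m = act (inv\<^bsub>G\<^esub> x) l"
    have il: "inv\<^bsub>L\<^esub> l \<in> carrier L" using l by simp
    have mL: "m \<in> carrier L" unfolding m_def by (rule act_closed[OF D xiG l])
    have im: "inv\<^bsub>L\<^esub> m = act (inv\<^bsub>G\<^esub> x) (inv\<^bsub>L\<^esub> l)" unfolding m_def using act_inv[OF D xiG l] by simp
    define w where "w = (\<lambda>i. inverse (sig (inv\<^bsub>G\<^esub> x) (inv\<^bsub>L\<^esub> m) m) * mv I (rhoM (inv\<^bsub>L\<^esub> m) (inv\<^bsub>G\<^esub> x)) u i)"
    show "fd (comp_act I (dual_rho L G act sig tau rhoM) x l v) u = conj_dual_act L G act sig tau I rhoM x l (fd v) u"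
    proof (cases "u \<in> U")
      case False then show ?thesis unfolding fd_def conj_dual_act_def Let_def U_def by simp
    next
      case True
      have uv: "u \<in> vecs I" using True Uv by auto
      have wU: "w \<in> U"
      proof (rule Ufix)
        show "w \<in> vecs I" unfolding w_def using mv_vecs[of I] unfolding vecs_def by auto
        have "mv I (rhoM \<one>\<^bsub>L\<^esub> (inv\<^bsub>G\<^esub> x)) (mv I (rhoM (inv\<^bsub>L\<^esub> m) (inv\<^bsub>G\<^esub> x)) u)
            = mv I (rhoM (inv\<^bsub>L\<^esub> m) (inv\<^bsub>G\<^esub> x)) u"
          using km_mult[OF KM oneL2 _ xiG xiG uv, of "inv\<^bsub>L\<^esub> m"] mL
            ccd_sig_u1[OF D xiG, of "inv\<^bsub>L\<^esub> m"] by simp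
        then show "mv I (rhoM \<one>\<^bsub>L\<^esub> (inv\<^bsub>G\<^esub> x)) w = w"
          unfolding w_def by (simp add: mv_scale)
      qed
      have "fd (comp_act I (dual_rho L G act sig tau rhoM) x l v) u
          = (\<Sum>i\<in>I. mv I (dual_rho L G act sig tau rhoM l x) v i * u i)"
        unfolding fd_def comp_act_def using True by simp
      also have "\<dots> = (tau x (inv\<^bsub>G\<^esub> x) (inv\<^bsub>L\<^esub> l) * sig x (inv\<^bsub>L\<^esub> l) l)
          * (\<Sum>j\<in>I. v j * mv I (rhoM (act (inv\<^bsub>G\<^esub> x) (inv\<^bsub>L\<^esub> l)) (inv\<^bsub>G\<^esub> x)) u j)"
        unfolding dual_rho_def by (rule pair_transpose)
      also have "\<dots> = inverse (tau x (inv\<^bsub>G\<^esub> x) l) * (inverse (sig (inv\<^bsub>G\<^esub> x) (inv\<^bsub>L\<^esub> m) m)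
          * (\<Sum>j\<in>I. v j * mv I (rhoM (inv\<^bsub>L\<^esub> m) (inv\<^bsub>G\<^esub> x)) u j))"
        using im unfolding scalar_id[OF l] m_def by (simp add: mult.assoc)
      also have "\<dots> = inverse (tau x (inv\<^bsub>G\<^esub> x) l) * fd v w"
        unfolding fd_def using wU unfolding w_def by (simp add: sum_distrib_left mult.left_commute)
      also have "\<dots> = conj_dual_act L G act sig tau I rhoM x l (fd v) u"
        unfolding conj_dual_act_def Let_def using True unfolding U_def[symmetric] w_def m_def by simp
      finally show ?thesis .
    qed
  qed
  show ?thesis
    unfolding tw_iso_def
    apply (rule exI[of _ fd])
    using lin inj sub sup intw unfolding V_def[symmetric] U_def[symmetric] bij_betw_def by blast
qed

end
theorem theorem2p2:
  fixes L :: "('l,'e1) monoid_scheme" and G :: "('g,'e2) monoid_scheme"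
    and act :: "'g \<Rightarrow> 'l \<Rightarrow> 'l"
    and sig :: "'g \<Rightarrow> 'l \<Rightarrow> 'l \<Rightarrow> 'k::field"
    and tau :: "'g \<Rightarrow> 'g \<Rightarrow> 'l \<Rightarrow> 'k"
    and I :: "'a set" and rhoM :: "'l \<Rightarrow> 'g \<Rightarrow> 'a \<Rightarrow> 'a \<Rightarrow> 'k"
    and J :: "'b set" and rhoN :: "'l \<Rightarrow> 'g \<Rightarrow> 'b \<Rightarrow> 'b \<Rightarrow> 'k"
    and x :: 'g
  assumes "alg_closed TYPE('k)"
    and "crossed_coproduct_data L G act sig tau"
    and "K_module L G sig I rhoM"
    and "K_module L G sig J rhoN"
    and "x \<in> carrier G"
  shows "tw_iso (carrier L)
           (comp_space L (I \<times> J) (tensor_rho G act tau rhoM rhoN) x)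
           (comp_act (I \<times> J) (tensor_rho G act tau rhoM rhoN) x)
           (sum_space L G I J rhoM rhoN x)
           (sum_act G act tau I J rhoM rhoN x)
         \<and> tw_iso (carrier L)
           (comp_space L I (dual_rho L G act sig tau rhoM) x)
           (comp_act I (dual_rho L G act sig tau rhoM) x)
           (dual_space (comp_space L I rhoM (inv\<^bsub>G\<^esub> x)))
           (conj_dual_act L G act sig tau I rhoM x)"
proof -
  show ?thesis
    using part1[OF assms(2,3,4,5)] part2[OF assms(2,3,5)] by blast
qed

end
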